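(* Let $\alpha\in\mathbb{Q}(i)\setminus\mathbb{R}$ with $|\alpha|>1$, let $P_\alpha(X)=a_2X^2+a_1X+a_0$ with $a_0,a_1,a_2\in\mathbb{Z}$ coprime, $a_2>0$ and $P_\alpha(\alpha)=0$, let $\mathcal{D}=\{0,1,\ldots,|a_0|-1\}$, and let $\Lambda_\alpha=\mathbb{Z}[\alpha]\cap\alpha^{-1}\mathbb{Z}[\alpha^{-1}]$. Then for every $x\in\Lambda_\alpha$ there is a unique $d\in\mathcal{D}$ such that $\frac{x-d}{\alpha}\in\Lambda_\alpha$; consequently the backward division map $T_\alpha:\Lambda_\alpha\to\Lambda_\alpha$, $x\mapsto \frac{x-d}{\alpha}$ with this $d$, is well defined.
   Context: It is known that $\Lambda_\alpha=a_2\mathbb{Z}+(a_2\alpha+a_1)\mathbb{Z}$ is a lattice in $\mathbb{C}$. *)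

theory Defs
  imports Complex_Main
begin

definition int_adjoin :: "complex \<Rightarrow> complex set" where
  "int_adjoin a = {z. \<exists>n (c :: nat \<Rightarrow> int). z = (\<Sum>i\<le>n. of_int (c i) * a ^ i)}"

definition Lambda :: "complex \<Rightarrow> complex set" where
  "Lambda a = int_adjoin a \<inter> (\<lambda>z. inverse a * z) ` int_adjoin (inverse a)"

end

theory Submission imports Defs "HOL-Computational_Algebra.Polynomial_Factorial" begin
definition ip :: "int poly \<Rightarrow> complex \<Rightarrow> complex" where
  "ip p a = poly (map_poly of_int p) a"

lemma map_poly_of_int_mult:
  "map_poly (of_int :: int \<Rightarrow> 'a::comm_ring_1) (p * q) = map_poly of_int p * map_poly of_int q"
  by (rule poly_eqI) (simp add: coeff_map_poly coeff_mult)

lemma ip_add [simp]: "ip (p + q) a = ip p a + ip q a"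
proof -
  have "map_poly (of_int :: int \<Rightarrow> complex) (p + q) = map_poly of_int p + map_poly of_int q"
    by (rule poly_eqI) (simp add: coeff_map_poly)
  thus ?thesis by (simp add: ip_def)
qed

lemma ip_diff [simp]: "ip (p - q) a = ip p a - ip q a"
proof -
  have "map_poly (of_int :: int \<Rightarrow> complex) (p - q) = map_poly of_int p - map_poly of_int q"
    by (rule poly_eqI) (simp add: coeff_map_poly)
  thus ?thesis by (simp add: ip_def)
qed

lemma ip_mult [simp]: "ip (p * q) a = ip p a * ip q a"
  by (simp add: ip_def map_poly_of_int_mult)

lemma ip_smult [simp]: "ip (smult c p) a = of_int c * ip p a"
proof -
  have "map_poly (of_int :: int \<Rightarrow> complex) (smult c p) = smult (of_int c) (map_poly of_int p)"
    by (rule poly_eqI) (simp add: coeff_map_poly)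
  thus ?thesis by (simp add: ip_def)
qed

lemma ip_monom [simp]: "ip (monom c n) a = of_int c * a ^ n"
  by (simp add: ip_def map_poly_monom poly_monom)

lemma ip_pCons [simp]: "ip (pCons c p) a = of_int c + a * ip p a"
  by (simp add: ip_def map_poly_pCons)

lemma ip_0 [simp]: "ip 0 a = 0"
  by (simp add: ip_def)

lemma ip_sum: "ip (sum f A) a = (\<Sum>i\<in>A. ip (f i) a)"
  by (induction A rule: infinite_finite_induct) auto

lemma content_f:
  fixes a0 a1 a2 :: int
  assumes "a2 \<noteq> 0" "gcd (gcd a0 a1) a2 = 1"
  shows "content [:a0, a1, a2:] = 1"
  using assms by (simp add: content_def gcd.assoc)


lemma int_adjoin_iff: "z \<in> int_adjoin a \<longleftrightarrow> (\<exists>p. z = ip p a)"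
proof
  assume "z \<in> int_adjoin a"
  then obtain n c where z: "z = (\<Sum>i\<le>n. of_int (c i) * a ^ i)"
    by (auto simp: int_adjoin_def)
  have "\<exists>p. (\<Sum>i\<le>n. of_int (c i) * a ^ i) = ip p a" for n
  proof (induction n)
    case 0
    show ?case by (rule exI[of _ "[:c 0:]"]) simp
  next
    case (Suc n)
    then obtain p where "(\<Sum>i\<le>n. of_int (c i) * a ^ i) = ip p a" by blast
    then show ?case by (intro exI[of _ "p + monom (c (Suc n)) (Suc n)"]) simp
  qed
  then show "\<exists>p. z = ip p a" using z by blast
next
  assume "\<exists>p. z = ip p a"
  then obtain p where z: "z = ip p a" by blast
  have "z = (\<Sum>i\<le>degree (map_poly (of_int :: int \<Rightarrow> complex) p). of_int (coeff p i) * a ^ i)"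
    unfolding z ip_def poly_altdef by (simp add: coeff_map_poly)
  then show "z \<in> int_adjoin a" unfolding int_adjoin_def by blast
qed

lemma Im_nonzero: "(\<alpha>::complex) \<notin> \<real> \<Longrightarrow> Im \<alpha> \<noteq> 0"
  using complex_is_Real_iff by blast

lemma coord_unique:
  fixes \<alpha> :: complex and A B C D :: real
  assumes "\<alpha> \<notin> \<real>" "of_real A + of_real B * \<alpha> = of_real C + of_real D * \<alpha>"
  shows "B = D"
proof -
  have "Im (of_real A + of_real B * \<alpha>) = Im (of_real C + of_real D * \<alpha>)" using assms(2) by simp
  hence "B * Im \<alpha> = D * Im \<alpha>" by simp
  thus ?thesis using Im_nonzero[OF assms(1)] by simp
qed


lemma Lambda_sub:
  fixes \<alpha> x :: complex and a0 a1 a2 :: int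
  assumes nr: "\<alpha> \<notin> \<real>" and a2: "a2 \<noteq> 0" and g: "gcd (gcd a0 a1) a2 = 1"
    and eq: "of_int a2 * \<alpha>^2 + of_int a1 * \<alpha> + of_int a0 = 0"
    and x: "x \<in> Lambda \<alpha>"
  shows "\<exists>u v::int. x = of_int a2 * of_int u + (of_int a2 * \<alpha> + of_int a1) * of_int v"
proof -
  have a0ne: "\<alpha> \<noteq> 0" using nr by auto
  from x obtain P where xP: "x = ip P \<alpha>"
    by (auto simp: Lambda_def int_adjoin_iff)
  from x obtain y where xy: "x = inverse \<alpha> * y" and "y \<in> int_adjoin (inverse \<alpha>)"
    by (auto simp: Lambda_def)
  then obtain k e where y: "y = (\<Sum>i\<le>k. of_int (e i) * (inverse \<alpha>) ^ i)"
    by (auto simp: int_adjoin_def)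
  define m where "m = k + 3"
  define R where "R = (\<Sum>i\<le>k. monom (e i) (m - 1 - i))"
  have evR: "ip R \<alpha> = \<alpha>^m * x"
  proof -
    have "ip R \<alpha> = (\<Sum>i\<le>k. of_int (e i) * \<alpha> ^ (m - 1 - i))"
      by (simp add: R_def ip_sum)
    also have "\<dots> = (\<Sum>i\<le>k. \<alpha>^m * (inverse \<alpha> * (of_int (e i) * (inverse \<alpha>) ^ i)))"
    proof (rule sum.cong)
      fix i assume "i \<in> {..k}"
      hence "m = (m - 1 - i) + Suc i" by (auto simp: m_def)
      hence "\<alpha>^m = \<alpha>^(m - 1 - i) * \<alpha>^(Suc i)" by (metis power_add)
      thus "of_int (e i) * \<alpha> ^ (m - 1 - i) = \<alpha>^m * (inverse \<alpha> * (of_int (e i) * (inverse \<alpha>) ^ i))"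
        using a0ne by (simp add: field_simps power_inverse)
    qed simp
    also have "\<dots> = \<alpha>^m * x" by (simp add: xy y sum_distrib_left)
    finally show ?thesis .
  qed
  have coeffR: "coeff R j = 0" if "j \<ge> m" for j
    using that unfolding R_def coeff_sum by (intro sum.neutral) (auto simp: coeff_monom m_def)
  define G where "G = monom 1 m * P - R"
  have evG: "ip G \<alpha> = 0" by (simp add: G_def evR xP)
  define f where "f = [:a0, a1, a2:]"
  have fne: "f \<noteq> 0" and degf: "degree f = 2" and lcf: "coeff f (degree f) = a2"
    using a2 by (auto simp: f_def)
  have evf: "ip f \<alpha> = 0" using eq by (simp add: f_def algebra_simps power2_eq_square)
  have cf: "content f = 1" using content_f[OF a2 g] by (simp add: f_def)
  obtain q r where qr: "pseudo_divmod G f = (q, r)" by (metis prod.exhaust)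
  define c where "c = a2 ^ (Suc (degree G) - degree f)"
  have c0: "c \<noteq> 0" using a2 by (simp add: c_def)
  have pd: "smult c G = f * q + r" using pseudo_divmod(1)[OF fne qr] lcf by (simp add: c_def)
  have rdeg: "r = 0 \<or> degree r < 2" using pseudo_divmod(2)[OF fne qr] degf by simp
  have evr: "ip r \<alpha> = 0"
  proof -
    have "ip (smult c G) \<alpha> = ip (f * q + r) \<alpha>" by (simp only: pd)
    thus ?thesis using evG evf by simp
  qed
  have r0: "r = 0"
  proof -
    have rr: "r = [:coeff r 0, coeff r 1:]"
    proof (rule poly_eqI)
      fix n show "coeff r n = coeff [:coeff r 0, coeff r 1:] n"
        using rdeg by (cases n; cases "n - 1") (auto simp: coeff_eq_0 coeff_pCons)
    qed
    have "of_int (coeff r 0) + \<alpha> * of_int (coeff r 1) = 0"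
      using evr by (subst (asm) rr) simp
    hence "of_real (of_int (coeff r 0)) + of_real (of_int (coeff r 1)) * \<alpha> = of_real 0 + of_real 0 * \<alpha>"
      by (simp add: algebra_simps)
    hence r1: "coeff r 1 = 0" using coord_unique[OF nr] by fastforce
    hence "coeff r 0 = 0" using \<open>of_int (coeff r 0) + \<alpha> * of_int (coeff r 1) = 0\<close> by simp
    with r1 show ?thesis by (subst rr) simp
  qed
  have "smult c G = f * q" using pd r0 by simp
  hence "content (smult c G) = content q" using cf by (simp add: content_mult)
  hence "content q = \<bar>c\<bar> * content G" by simp
  hence "\<bar>c\<bar> dvd content q" by (metis dvd_triv_left)
  hence "c dvd content q" by simp
  hence "[:c:] dvd q" by (simp add: const_poly_dvd_iff_dvd_content)
  then obtain S where qS: "q = [:c:] * S" by (elim dvdE)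
  have "smult c G = smult c (f * S)" using \<open>smult c G = f * q\<close> qS by simp
  hence GS: "G = f * S"
  proof (intro poly_eqI)
    fix n assume "smult c G = smult c (f * S)"
    hence "coeff (smult c G) n = coeff (smult c (f * S)) n" by simp
    thus "coeff G n = coeff (f * S) n" using c0 by simp
  qed
  define A where "A = poly_cutoff (m - 1) S"
  define B where "B = poly_shift (m - 1) S"
  have SAB: "S = A + monom 1 (m - 1) * B"
    by (rule poly_eqI) (auto simp: A_def B_def coeff_poly_cutoff coeff_poly_shift coeff_monom_mult)
  define T where "T = monom 1 1 * P - f * B"
  have mm: "monom (1::int) m = monom 1 (m - 1) * monom 1 1"
    by (simp add: mult_monom m_def numeral_eq_Suc)
  have key: "monom 1 (m - 1) * T = R + f * A"
  proof -
    have "monom 1 m * P - R = f * A + monom 1 (m - 1) * (f * B)"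
      using GS SAB by (simp add: G_def algebra_simps)
    thus ?thesis by (simp add: T_def mm algebra_simps)
  qed
  have degA: "degree A \<le> m - 2"
    by (rule degree_le) (auto simp: A_def coeff_poly_cutoff m_def)
  have degfA: "degree (f * A) \<le> m"
    using degree_mult_le[of f A] degA degf by (simp add: m_def)
  have Thigh: "coeff T j = 0" if "j \<ge> 2" for j
  proof -
    have "coeff T j = coeff (monom 1 (m - 1) * T) (j + (m - 1))"
      by (simp add: coeff_monom_mult)
    also have "\<dots> = coeff R (j + (m - 1)) + coeff (f * A) (j + (m - 1))"
      unfolding key coeff_add ..
    also have "\<dots> = 0" using that degfA coeffR[of "j + (m - 1)"]
      by (simp add: coeff_eq_0 m_def)
    finally show ?thesis .
  qed
  have T0: "coeff T 0 = - a0 * coeff B 0"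
    by (simp add: T_def coeff_monom_mult coeff_mult_0 f_def)
  have fsplit: "f = [:a0, a1:] + monom a2 2"
    by (rule poly_eqI) (simp add: f_def coeff_pCons coeff_monom split: nat.split)
  have T1: "coeff T 1 = a2 * coeff A (m - 2)"
  proof -
    have "coeff T 1 = coeff (monom 1 (m - 1) * T) (1 + (m - 1))"
      by (simp add: coeff_monom_mult)
    also have "\<dots> = coeff (f * A) m"
    proof -
      have "1 + (m - 1) = m" by (simp add: m_def)
      thus ?thesis unfolding key coeff_add using coeffR[of m] by simp
    qed
    also have "\<dots> = coeff ([:a0, a1:] * A) m + coeff (monom a2 2 * A) m"
      by (simp add: fsplit algebra_simps)
    also have "coeff ([:a0, a1:] * A) m = 0"
    proof -
      have d1: "degree [:a0, a1:] \<le> 1" by (simp add: degree_pCons_eq_if)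
      have "degree ([:a0, a1:] * A) \<le> degree [:a0, a1:] + degree A" by (rule degree_mult_le)
      hence "degree ([:a0, a1:] * A) \<le> 1 + (m - 2)" using d1 degA by linarith
      thus ?thesis by (intro coeff_eq_0) (simp add: m_def)
    qed
    also have "coeff (monom a2 2 * A) m = a2 * coeff A (m - 2)"
      by (simp add: coeff_monom_mult m_def)
    finally show ?thesis by simp
  qed
  have Tl: "T = [:coeff T 0, coeff T 1:]"
  proof (rule poly_eqI)
    fix n show "coeff T n = coeff [:coeff T 0, coeff T 1:] n"
      using Thigh by (cases n; cases "n - 1") (auto simp: coeff_pCons)
  qed
  have "ip T \<alpha> = \<alpha> * x" by (simp add: T_def xP evf)
  hence "\<alpha> * x = of_int (- a0 * coeff B 0) + \<alpha> * of_int (a2 * coeff A (m - 2))"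
    using T1 by (subst (asm) Tl) (simp add: T0)
  hence xe: "x = of_int a2 * of_int (coeff A (m - 2)) - of_int a0 / \<alpha> * of_int (coeff B 0)"
    using a0ne by (simp add: field_simps)
  have ae: "of_int a0 / \<alpha> = - (of_int a2 * \<alpha> + of_int a1)"
  proof -
    have "of_int a0 = - (of_int a2 * \<alpha> + of_int a1) * \<alpha>" using eq by algebra
    thus ?thesis using a0ne by simp
  qed
  show ?thesis unfolding xe ae by (intro exI[of _ "coeff A (m - 2)"] exI[of _ "coeff B 0"]) (simp add: algebra_simps)
qed


lemma Lambda_sup:
  fixes \<alpha> :: complex and a0 a1 a2 u v :: int
  assumes a0ne: "\<alpha> \<noteq> 0"
    and eq: "of_int a2 * \<alpha>^2 + of_int a1 * \<alpha> + of_int a0 = 0"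
  shows "of_int a2 * of_int u + (of_int a2 * \<alpha> + of_int a1) * of_int v \<in> Lambda \<alpha>"
proof -
  let ?z = "of_int a2 * of_int u + (of_int a2 * \<alpha> + of_int a1) * of_int v :: complex"
  have e0: "of_int a0 = - (of_int a2 * \<alpha> + of_int a1) * \<alpha>" using eq by algebra
  have "?z = ip [:a2 * u + a1 * v, a2 * v:] \<alpha>" by (simp add: algebra_simps)
  hence z1: "?z \<in> int_adjoin \<alpha>" unfolding int_adjoin_iff by blast
  have "?z = inverse \<alpha> * ip [:- a1 * u - a0 * v, - a0 * u:] (inverse \<alpha>)"
    using a0ne by (simp add: e0 field_simps power2_eq_square)
  moreover have "ip [:- a1 * u - a0 * v, - a0 * u:] (inverse \<alpha>) \<in> int_adjoin (inverse \<alpha>)"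
    unfolding int_adjoin_iff by blast
  ultimately have "?z \<in> (\<lambda>z. inverse \<alpha> * z) ` int_adjoin (inverse \<alpha>)" by blast
  with z1 show ?thesis by (simp add: Lambda_def)
qed

theorem mainTheorem3:
  fixes \<alpha> :: complex and a0 a1 a2 :: int
  assumes "\<exists>p q :: rat. \<alpha> = Complex (of_rat p) (of_rat q)"
    and "\<alpha> \<notin> \<real>"
    and "cmod \<alpha> > 1"
    and "gcd (gcd a0 a1) a2 = 1"
    and "a2 > 0"
    and "of_int a2 * \<alpha>^2 + of_int a1 * \<alpha> + of_int a0 = 0"
  shows "\<forall>x \<in> Lambda \<alpha>. \<exists>!d :: int. d \<in> {0..\<bar>a0\<bar> - 1} \<and> (x - of_int d) / \<alpha> \<in> Lambda \<alpha>"
proof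
  note nr = assms(2) and eq = assms(6)
  have a2: "a2 \<noteq> 0" using assms(5) by simp
  have ane: "\<alpha> \<noteq> 0" using nr by auto
  have e0: "of_int a0 = - (of_int a2 * \<alpha> + of_int a1) * \<alpha>" using eq by algebra
  have a0: "a0 \<noteq> 0"
  proof
    assume "a0 = 0"
    with e0 have "(of_int a2 * \<alpha> + of_int a1) * \<alpha> = 0" by (metis minus_mult_left neg_equal_0_iff_equal of_int_0)
    with ane have "of_int a2 * \<alpha> + of_int a1 = 0" by simp
    hence "\<alpha> * of_int a2 = - of_int a1" by (simp add: algebra_simps eq_neg_iff_add_eq_0)
    hence "\<alpha> = - of_int a1 / of_int a2" using a2 by (simp add: field_simps)
    hence "\<alpha> \<in> \<real>" by (simp add: Reals_def) (metis of_real_divide of_real_minus of_real_of_int_eq rangeI)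
    with nr show False by simp
  qed
  fix x assume x: "x \<in> Lambda \<alpha>"
  from Lambda_sub[OF nr a2 assms(4) eq x] obtain u v :: int
    where xuv: "x = of_int a2 * of_int u + (of_int a2 * \<alpha> + of_int a1) * of_int v" by blast
  define N where "N = a2 * u + a1 * v"
  have iden: "(x - of_int d) / \<alpha> = of_int a2 * of_int v + of_int (N - d) / \<alpha>" for d
    using ane by (simp add: xuv N_def field_simps)
  have e1: "1 / \<alpha> = - (of_int a2 * \<alpha> + of_int a1) / of_int a0"
    using ane a0 e0 by (simp add: field_simps)
  define d0 where "d0 = N mod \<bar>a0\<bar>"
  have d0r: "d0 \<in> {0..\<bar>a0\<bar> - 1}" using a0 by (simp add: d0_def)
  have uniq: "d = d0" if d: "d \<in> {0..\<bar>a0\<bar> - 1}" "(x - of_int d) / \<alpha> \<in> Lambda \<alpha>" for d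
  proof -
    from Lambda_sub[OF nr a2 assms(4) eq d(2)] obtain u' v' :: int
      where "(x - of_int d) / \<alpha> = of_int a2 * of_int u' + (of_int a2 * \<alpha> + of_int a1) * of_int v'" by blast
    hence "of_int a2 * of_int v + of_int (N - d) * (1 / \<alpha>) = of_int a2 * of_int u' + (of_int a2 * \<alpha> + of_int a1) * of_int v'"
      unfolding iden by simp
    hence h: "of_int a2 * of_int v + of_int (N - d) * (- (of_int a2 * \<alpha> + of_int a1) / of_int a0) = of_int a2 * of_int u' + (of_int a2 * \<alpha> + of_int a1) * of_int v'"
      unfolding e1 .
    have "of_real (of_int a2 * of_int v - of_int (N - d) * of_int a1 / of_int a0)
        + of_real (- of_int (N - d) * of_int a2 / of_int a0) * \<alpha>
        = of_int a2 * of_int v + of_int (N - d) * (- (of_int a2 * \<alpha> + of_int a1) / of_int a0)"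
      using a0 by (simp add: field_simps)
    also have "\<dots> = of_int a2 * of_int u' + (of_int a2 * \<alpha> + of_int a1) * of_int v'" by (rule h)
    also have "\<dots> = of_real (of_int a2 * of_int u' + of_int a1 * of_int v') + of_real (of_int a2 * of_int v') * \<alpha>"
      by (simp add: algebra_simps)
    finally have "of_real (of_int a2 * of_int v - of_int (N - d) * of_int a1 / of_int a0)
        + of_real (- of_int (N - d) * of_int a2 / of_int a0) * \<alpha>
        = of_real (of_int a2 * of_int u' + of_int a1 * of_int v') + of_real (of_int a2 * of_int v') * \<alpha>" .
    hence "- real_of_int (N - d) * of_int a2 / of_int a0 = of_int a2 * of_int v'"
      by (rule coord_unique[OF nr])
    hence "real_of_int a2 * (- real_of_int (N - d) / of_int a0) = real_of_int a2 * of_int v'" by (simp add: mult.commute)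
    hence "- real_of_int (N - d) / of_int a0 = of_int v'" using a2 by (metis mult_cancel_left of_int_eq_0_iff)
    hence "real_of_int (N - d) = of_int (- a0 * v')" using a0 by (simp add: field_simps)
    hence Nd: "N = d + a0 * (- v')" by linarith
    have "N mod \<bar>a0\<bar> = (d mod \<bar>a0\<bar> + (a0 * (- v')) mod \<bar>a0\<bar>) mod \<bar>a0\<bar>"
      unfolding Nd by (rule mod_add_eq[symmetric])
    also have "(a0 * (- v')) mod \<bar>a0\<bar> = 0" by simp
    also have "d mod \<bar>a0\<bar> = d" using d(1) by (simp add: mod_pos_pos_trivial)
    finally show ?thesis using d(1) by (simp add: d0_def mod_pos_pos_trivial)
  qed
  have ex: "(x - of_int d0) / \<alpha> \<in> Lambda \<alpha>"
  proof -
    have "\<bar>a0\<bar> dvd N - d0" unfolding d0_def by (simp add: minus_mod_eq_mult_div)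
    hence "a0 dvd N - d0" by simp
    then obtain k where k: "N - d0 = a0 * k" by (elim dvdE)
    have "(x - of_int d0) / \<alpha> = of_int a2 * of_int v + (of_int a2 * \<alpha> + of_int a1) * of_int (- k)"
      unfolding iden k using ane by (simp add: e0 field_simps)
    thus ?thesis using Lambda_sup[OF ane eq, of v "- k"] by (simp only: of_int_minus)
  qed
  show "\<exists>!d :: int. d \<in> {0..\<bar>a0\<bar> - 1} \<and> (x - of_int d) / \<alpha> \<in> Lambda \<alpha>"
    using d0r ex uniq by blast
qed

end
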